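(* For every $\beta>0$, the origin is the unique equilibrium of the ODE $\dot x=f(x)$ on $\mathbb R^n\times\mathbb R^n$, $$f(x_1,x_2)=\begin{bmatrix}-Dx_1+\gamma DP\big(M(x_2+Q^* )-M(Q^* )\big)\\ \beta Dx_1-\beta Dx_2\end{bmatrix},$$ and every solution converges to the origin as $t\to\infty$. Equivalently, for the ODE $\dot Q^A=DR+\gamma DPM(Q^B)-DQ^A$, $\dot Q^B=\beta D(Q^A-Q^B)$, every solution satisfies $(Q^A(t),Q^B(t))\to(Q^*,Q^* )$.
   Context: Finite MDP with states $\mathcal S$, actions $\mathcal A$, kernel $P$, expected reward vector $R\in\mathbb R^n$, discount $\gamma\in[0,1)$; $n=|\mathcal S||\mathcal A|$. $D$ is the diagonal matrix of a probability distribution $d$ on $\mathcal S\times\mathcal A$ with $d(s,a)>0$; $P$ is the $n\times|\mathcal S|$ matrix with row $(s,a)$ equal to $P(\cdot\mid s,a)$; $M(Q)(s)=\max_aQ(s,a)$; $Q^*=R+\gamma PM(Q^* )$ is the optimal Q-function. *)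

theory Defs
  imports "HOL-Analysis.Analysis"
begin

definition maxQ :: "real^('s::finite \<times> 'a::finite) \<Rightarrow> 's \<Rightarrow> real" where
  "maxQ Q s = Max (range (\<lambda>a. Q $ (s, a)))"

definition PM :: "('s::finite \<times> 'a::finite \<Rightarrow> 's \<Rightarrow> real) \<Rightarrow> ('s \<Rightarrow> real) \<Rightarrow> real^('s \<times> 'a)" where
  "PM P v = (\<chi> sa. \<Sum>s'\<in>UNIV. P sa s' * v s')"

definition Dmul :: "('i::finite \<Rightarrow> real) \<Rightarrow> real^'i \<Rightarrow> real^'i" where
  "Dmul d x = (\<chi> i. d i * x $ i)"

definition valid_MDP :: "('s::finite \<times> 'a::finite \<Rightarrow> 's \<Rightarrow> real) \<Rightarrow> bool" where
  "valid_MDP P \<longleftrightarrow> (\<forall>sa s'. P sa s' \<ge> 0) \<and> (\<forall>sa. (\<Sum>s'\<in>UNIV. P sa s') = 1)"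

definition valid_dist :: "('i::finite \<Rightarrow> real) \<Rightarrow> bool" where
  "valid_dist d \<longleftrightarrow> (\<forall>i. d i > 0) \<and> (\<Sum>i\<in>UNIV. d i) = 1"

definition errf ::
  "real \<Rightarrow> real \<Rightarrow> ('s::finite \<times> 'a::finite \<Rightarrow> real) \<Rightarrow> ('s \<times> 'a \<Rightarrow> 's \<Rightarrow> real)
   \<Rightarrow> real^('s \<times> 'a) \<Rightarrow> (real^('s \<times> 'a)) \<times> (real^('s \<times> 'a)) \<Rightarrow> (real^('s \<times> 'a)) \<times> (real^('s \<times> 'a))" where
  "errf \<gamma> \<beta> d P Qs x =
     (- Dmul d (fst x) + \<gamma> *\<^sub>R Dmul d (PM P (\<lambda>s. maxQ (snd x + Qs) s - maxQ Qs s)),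
      \<beta> *\<^sub>R Dmul d (fst x) - \<beta> *\<^sub>R Dmul d (snd x))"

definition origf ::
  "real \<Rightarrow> real \<Rightarrow> ('s::finite \<times> 'a::finite \<Rightarrow> real) \<Rightarrow> ('s \<times> 'a \<Rightarrow> 's \<Rightarrow> real)
   \<Rightarrow> real^('s \<times> 'a) \<Rightarrow> (real^('s \<times> 'a)) \<times> (real^('s \<times> 'a)) \<Rightarrow> (real^('s \<times> 'a)) \<times> (real^('s \<times> 'a))" where
  "origf \<gamma> \<beta> d P R q =
     (Dmul d R + \<gamma> *\<^sub>R Dmul d (PM P (maxQ (snd q))) - Dmul d (fst q),
      \<beta> *\<^sub>R Dmul d (fst q - snd q))"

definition is_solution :: "('v::real_normed_vector \<Rightarrow> 'v) \<Rightarrow> (real \<Rightarrow> 'v) \<Rightarrow> bool" where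
  "is_solution F x \<longleftrightarrow> (\<forall>t\<ge>0. (x has_vector_derivative F (x t)) (at t within {0..}))"

end

theory Submission imports Defs "HOL-Real_Asymp.Real_Asymp" begin
lemma core:
  fixes y y' :: "real \<Rightarrow> 'j::finite \<Rightarrow> real" and \<kappa> C :: real
  assumes der: "\<And>t j. t \<ge> 0 \<Longrightarrow> ((\<lambda>s. y s j) has_real_derivative y' t j) (at t within {0..})"
    and kpos: "\<kappa> > 0"
    and up: "\<And>t b j. t \<ge> 0 \<Longrightarrow> b > 0 \<Longrightarrow> (\<forall>k. \<bar>y t k\<bar> \<le> b) \<Longrightarrow> y t j = b \<Longrightarrow> y' t j < -\<kappa>*b"
    and lo: "\<And>t b j. t \<ge> 0 \<Longrightarrow> b > 0 \<Longrightarrow> (\<forall>k. \<bar>y t k\<bar> \<le> b) \<Longrightarrow> y t j = -b \<Longrightarrow> y' t j > \<kappa>*b"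
    and init: "\<And>j. \<bar>y 0 j\<bar> < C"
  shows "\<forall>t\<ge>0. \<forall>j. \<bar>y t j\<bar> < C * exp(-\<kappa>*t)"
proof (rule ccontr)
  define B where "B t = C * exp(-\<kappa>*t)" for t
  have Cpos: "C > 0" using init[of undefined] by linarith
  have Bpos: "B t > 0" for t using Cpos by (simp add: B_def)
  have Bder: "(B has_real_derivative (-\<kappa> * B t)) (at t)" for t
    unfolding B_def by (auto intro!: derivative_eq_intros)
  have cont: "continuous_on {0..} (\<lambda>s. y s j)" for j
    unfolding continuous_on_eq_continuous_within using DERIV_continuous[OF der] by auto
  define S where "S = {t \<in> {0..}. \<exists>j. B t \<le> \<bar>y t j\<bar>}"
  assume "\<not> (\<forall>t\<ge>0. \<forall>j. \<bar>y t j\<bar> < C * exp(-\<kappa>*t))"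
  then have ne: "S \<noteq> {}" unfolding S_def B_def by (auto simp: not_less)
  have "S = (\<Union>j\<in>UNIV. {t \<in> {0..}. B t \<le> \<bar>y t j\<bar>})" unfolding S_def by auto
  moreover have "closed {t \<in> {0..}. B t \<le> \<bar>y t j\<bar>}" for j
    by (rule continuous_on_closed_Collect_le) (auto intro!: continuous_intros cont simp: B_def)
  ultimately have clS: "closed S" by auto
  define t0 where "t0 = Inf S"
  have bdd: "bdd_below S" unfolding S_def by (auto intro: bdd_belowI[where m=0])
  have t0S: "t0 \<in> S" unfolding t0_def using closed_contains_Inf[OF ne bdd clS] .
  have below: "\<bar>y s j\<bar> < B s" if "0 \<le> s" "s < t0" for s j
  proof (rule ccontr)
    assume "\<not> \<bar>y s j\<bar> < B s"
    then have "s \<in> S" using that unfolding S_def by (auto simp: not_less)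
    then have "t0 \<le> s" unfolding t0_def by (rule cInf_lower[OF _ bdd])
    then show False using that by simp
  qed
  have t0nn: "t0 \<ge> 0" using t0S S_def by auto
  have "t0 \<noteq> 0"
  proof
    assume "t0 = 0"
    then obtain j where "B 0 \<le> \<bar>y 0 j\<bar>" using t0S S_def by auto
    then show False using init[of j] by (simp add: B_def)
  qed
  then have t0pos: "t0 > 0" using t0nn by simp
  have atw: "at t0 within {0..} = at t0" by (rule at_within_interior) (simp add: t0pos)
  have derat: "((\<lambda>s. y s j) has_real_derivative y' t0 j) (at t0)" for j
    using der[OF t0nn, of j] atw by simp
  obtain j where j: "B t0 \<le> \<bar>y t0 j\<bar>" using t0S S_def by auto
  have le: "\<bar>y t0 k\<bar> \<le> B t0" for k
  proof -
    have "isCont (\<lambda>s. \<bar>y s k\<bar> - B s) t0"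
      by (rule continuous_diff[OF continuous_rabs[OF DERIV_isCont[OF derat[of k]]] DERIV_isCont[OF Bder[of t0]]])
    then have "((\<lambda>s. \<bar>y s k\<bar> - B s) \<longlongrightarrow> \<bar>y t0 k\<bar> - B t0) (at t0)" by (simp add: isCont_def)
    then have lim: "((\<lambda>s. \<bar>y s k\<bar> - B s) \<longlongrightarrow> \<bar>y t0 k\<bar> - B t0) (at_left t0)"
      by (rule tendsto_mono[rotated]) (simp add: at_le)
    have "eventually (\<lambda>s. \<bar>y s k\<bar> - B s \<le> 0) (at_left t0)"
    proof -
      have H: "\<bar>y s k\<bar> - B s \<le> 0" if "s \<in> {0<..<t0}" for s using below[of s k] that by simp
      show ?thesis by (rule eventually_mono[OF eventually_at_left_real[OF t0pos] H])
    qed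
    from tendsto_upperbound[OF lim this] show ?thesis by simp
  qed
  have eq: "\<bar>y t0 j\<bar> = B t0" using j le[of j] by simp
  have allle: "\<forall>k. \<bar>y t0 k\<bar> \<le> B t0" using le by blast
  show False
  proof (cases "y t0 j \<ge> 0")
    case True
    then have yb: "y t0 j = B t0" using eq by simp
    have neg: "y' t0 j - (-\<kappa> * B t0) < 0" using up[OF t0nn Bpos allle yb] by simp
    have d: "((\<lambda>s. y s j - B s) has_real_derivative (y' t0 j - (-\<kappa> * B t0))) (at t0)"
      by (rule DERIV_diff[OF derat Bder])
    obtain dd where dd: "dd > 0" "\<forall>h>0. h < dd \<longrightarrow> y t0 j - B t0 < y (t0 - h) j - B (t0 - h)"
      using DERIV_neg_dec_left[OF d neg] by blast
    define h where "h = min dd t0 / 2"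
    have "h > 0" "h < dd" "h \<le> t0" using dd t0pos by (auto simp: h_def)
    then have "y t0 j - B t0 < y (t0 - h) j - B (t0 - h)" using dd(2) by blast
    then have "0 < y (t0 - h) j - B (t0 - h)" using yb by linarith
    moreover have "\<bar>y (t0-h) j\<bar> < B (t0-h)" using below[of "t0-h" j] \<open>h>0\<close> \<open>h \<le> t0\<close> by simp
    ultimately show False by simp
  next
    case False
    then have yb: "y t0 j = - B t0" using eq by simp
    have neg: "- y' t0 j - (-\<kappa> * B t0) < 0" using lo[OF t0nn Bpos allle yb] by simp
    have d: "((\<lambda>s. - y s j - B s) has_real_derivative (- y' t0 j - (-\<kappa> * B t0))) (at t0)"
      by (rule DERIV_diff[OF DERIV_minus[OF derat] Bder])
    obtain dd where dd: "dd > 0" "\<forall>h>0. h < dd \<longrightarrow> - y t0 j - B t0 < - y (t0 - h) j - B (t0 - h)"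
      using DERIV_neg_dec_left[OF d neg] by blast
    define h where "h = min dd t0 / 2"
    have "h > 0" "h < dd" "h \<le> t0" using dd t0pos by (auto simp: h_def)
    then have "- y t0 j - B t0 < - y (t0 - h) j - B (t0 - h)" using dd(2) by blast
    then have "0 < - y (t0 - h) j - B (t0 - h)" using yb by linarith
    moreover have "\<bar>y (t0-h) j\<bar> < B (t0-h)" using below[of "t0-h" j] \<open>h>0\<close> \<open>h \<le> t0\<close> by simp
    ultimately show False by simp
  qed
qed

lemma maxQ_diff_bound:
  fixes v Qs :: "real^('s::finite \<times> 'a::finite)"
  assumes "\<forall>j. \<bar>v $ j\<bar> \<le> b"
  shows "\<bar>maxQ (v + Qs) s - maxQ Qs s\<bar> \<le> b"
proof -
  have fin: "finite (range (\<lambda>a. Q $ (s, a)))" for Q :: "real^('s \<times> 'a)" by simp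
  have ne: "range (\<lambda>a. Q $ (s, a)) \<noteq> {}" for Q :: "real^('s \<times> 'a)" by simp
  have ge: "Q $ (s,a) \<le> maxQ Q s" for Q :: "real^('s \<times> 'a)" and a
    unfolding maxQ_def by (rule Max_ge[OF fin]) simp
  have "maxQ (v + Qs) s \<le> maxQ Qs s + b"
    unfolding maxQ_def[of "v + Qs"]
  proof (rule Max.boundedI[OF fin ne], clarsimp)
    fix a
    have "v $ (s,a) \<le> b" using assms by (metis abs_le_D1)
    then show "v $ (s, a) + Qs $ (s, a) \<le> maxQ Qs s + b" using ge[of Qs a] by linarith
  qed
  moreover have "maxQ Qs s \<le> maxQ (v + Qs) s + b"
    unfolding maxQ_def[of Qs]
  proof (rule Max.boundedI[OF fin ne], clarsimp)
    fix a
    have "- v $ (s,a) \<le> b" using assms by (metis abs_le_D2)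
    then show "Qs $ (s, a) \<le> maxQ (v + Qs) s + b" using ge[of "v + Qs" a] by simp
  qed
  ultimately show ?thesis by linarith
qed

lemma PM_bound:
  assumes "valid_MDP P" "\<And>s. \<bar>w s\<bar> \<le> b"
  shows "\<bar>PM P w $ i\<bar> \<le> b"
proof -
  have "\<bar>PM P w $ i\<bar> = \<bar>\<Sum>s'\<in>UNIV. P i s' * w s'\<bar>" by (simp add: PM_def)
  also have "\<dots> \<le> (\<Sum>s'\<in>UNIV. \<bar>P i s' * w s'\<bar>)" by (rule sum_abs)
  also have "\<dots> \<le> (\<Sum>s'\<in>UNIV. P i s' * b)"
  proof (rule sum_mono)
    fix s' have "P i s' \<ge> 0" using assms(1) unfolding valid_MDP_def by blast
    then show "\<bar>P i s' * w s'\<bar> \<le> P i s' * b" using assms(2)[of s'] by (simp add: abs_mult mult_left_mono)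
  qed
  also have "\<dots> = (\<Sum>s'\<in>UNIV. P i s') * b" by (simp add: sum_distrib_right)
  also have "\<dots> = b"
  proof -
    have "(\<Sum>s'\<in>UNIV. P i s') = 1" using assms(1) unfolding valid_MDP_def by blast
    then show ?thesis by simp
  qed
  finally show ?thesis .
qed

lemma comp_deriv_fst:
  fixes x :: "real \<Rightarrow> (real^'i::finite) \<times> (real^'i)"
  assumes "(x has_vector_derivative v) F"
  shows "((\<lambda>s. fst (x s) $ i) has_real_derivative (fst v $ i)) F"
proof -
  have bl: "bounded_linear (\<lambda>p::(real^'i) \<times> (real^'i). fst p $ i)"
    by (rule bounded_linear_compose[OF bounded_linear_vec_nth bounded_linear_fst])
  show ?thesis using bounded_linear.has_vector_derivative[OF bl assms]
    by (simp add: has_real_derivative_iff_has_vector_derivative)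
qed

lemma comp_deriv_snd:
  fixes x :: "real \<Rightarrow> (real^'i::finite) \<times> (real^'i)"
  assumes "(x has_vector_derivative v) F"
  shows "((\<lambda>s. snd (x s) $ i) has_real_derivative (snd v $ i)) F"
proof -
  have bl: "bounded_linear (\<lambda>p::(real^'i) \<times> (real^'i). snd p $ i)"
    by (rule bounded_linear_compose[OF bounded_linear_vec_nth bounded_linear_snd])
  show ?thesis using bounded_linear.has_vector_derivative[OF bl assms]
    by (simp add: has_real_derivative_iff_has_vector_derivative)
qed

lemma ineq_up1:
  fixes d dmin b \<gamma> S \<rho> c :: real
  assumes "dmin \<le> d" "dmin > 0" "b > 0" "0 \<le> \<gamma>" "\<bar>S\<bar> \<le> b / \<rho>" "0 < \<rho>" "c \<le> (\<rho> - \<gamma>) / \<rho>" "c > 0"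
  shows "- d * b + \<gamma> * (d * S) < - (dmin * c / 2) * b"
proof -
  have "\<gamma> * S \<le> \<gamma> * (b / \<rho>)" using assms by (meson abs_le_D1 mult_left_mono)
  then have "- b + \<gamma> * S \<le> - b + \<gamma> * (b / \<rho>)" by simp
  also have "\<dots> = - b * ((\<rho> - \<gamma>) / \<rho>)" using assms by (simp add: field_simps)
  also have "\<dots> \<le> - b * c"
  proof -
    have "b * c \<le> b * ((\<rho> - \<gamma>) / \<rho>)" using assms by (intro mult_left_mono) auto
    then show ?thesis by simp
  qed
  finally have A: "- b + \<gamma> * S \<le> - b * c" .
  have "- d * b + \<gamma> * (d * S) = d * (- b + \<gamma> * S)" by (simp add: algebra_simps)
  also have "\<dots> \<le> d * (- b * c)" using A assms by (intro mult_left_mono) auto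
  also have "\<dots> \<le> dmin * (- b * c)" using assms
    by (intro mult_right_mono_neg) (auto simp: mult_pos_pos)
  also have "\<dots> < - (dmin * c / 2) * b" using assms by (simp add: mult_pos_pos)
  finally show ?thesis .
qed

lemma ineq_lo1:
  fixes d dmin b \<gamma> S \<rho> c :: real
  assumes "dmin \<le> d" "dmin > 0" "b > 0" "0 \<le> \<gamma>" "\<bar>S\<bar> \<le> b / \<rho>" "0 < \<rho>" "c \<le> (\<rho> - \<gamma>) / \<rho>" "c > 0"
  shows "- d * (-b) + \<gamma> * (d * S) > (dmin * c / 2) * b"
proof -
  have "\<bar>-S\<bar> \<le> b / \<rho>" using assms by simp
  from ineq_up1[OF assms(1-4) this assms(6-8)] show ?thesis by (simp add: algebra_simps)
qed

lemma ineq_up2: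
  fixes d dmin b \<beta> u \<rho> c :: real
  assumes "dmin \<le> d" "dmin > 0" "b > 0" "\<beta> > 0" "\<bar>u\<bar> \<le> b" "0 < \<rho>" "\<rho> < 1" "c \<le> \<beta> * (1 - \<rho>)" "c > 0"
  shows "\<rho> * (\<beta> * (d * u) - \<beta> * (d * (b / \<rho>))) < - (dmin * c / 2) * b"
proof -
  have e: "\<rho> * (\<beta> * (d * u) - \<beta> * (d * (b / \<rho>))) = \<beta> * d * (\<rho> * u - b)" using assms by (simp add: field_simps)
  have "\<rho> * u \<le> \<rho> * b" using assms by (meson abs_le_D1 mult_left_mono less_imp_le)
  then have "\<rho> * u - b \<le> - b * (1 - \<rho>)" by (simp add: algebra_simps)
  moreover have "\<beta> * d > 0" using assms by simp
  ultimately have "\<beta> * d * (\<rho> * u - b) \<le> \<beta> * d * (- b * (1 - \<rho>))" by (metis less_imp_le mult_left_mono)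
  also have "\<dots> = - (b * d) * (\<beta> * (1 - \<rho>))" by (simp add: algebra_simps)
  also have "\<dots> \<le> - (b * d) * c" using assms by (intro mult_left_mono_neg) auto
  also have "\<dots> \<le> - (b * dmin) * c" using assms by (intro mult_right_mono) auto
  also have "\<dots> < - (dmin * c / 2) * b" using assms by (simp add: algebra_simps)
  finally show ?thesis using e by simp
qed

lemma ineq_lo2:
  fixes d dmin b \<beta> u \<rho> c :: real
  assumes "dmin \<le> d" "dmin > 0" "b > 0" "\<beta> > 0" "\<bar>u\<bar> \<le> b" "0 < \<rho>" "\<rho> < 1" "c \<le> \<beta> * (1 - \<rho>)" "c > 0"
  shows "\<rho> * (\<beta> * (d * u) - \<beta> * (d * (-b / \<rho>))) > (dmin * c / 2) * b"
proof -
  have "\<bar>-u\<bar> \<le> b" using assms by simp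
  from ineq_up2[OF assms(1-4) this assms(6-9)] show ?thesis by (simp add: algebra_simps)
qed

lemma errf_converge:
  fixes P :: "'s::finite \<times> 'a::finite \<Rightarrow> 's \<Rightarrow> real" and Qs :: "real^('s \<times> 'a)"
    and d :: "'s \<times> 'a \<Rightarrow> real" and \<gamma> \<beta> :: real
  assumes MDP: "valid_MDP P" and dist: "valid_dist d" and g0: "0 \<le> \<gamma>" and g1: "\<gamma> < 1"
    and bpos: "\<beta> > 0" and sol: "is_solution (errf \<gamma> \<beta> d P Qs) x"
  shows "(x \<longlongrightarrow> 0) at_top"
proof -
  define \<rho> where "\<rho> = (1 + \<gamma>) / 2"
  have rho: "0 < \<rho>" "\<rho> < 1" "\<gamma> < \<rho>" using g0 g1 by (auto simp: \<rho>_def)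
  define c where "c = min ((\<rho> - \<gamma>) / \<rho>) (\<beta> * (1 - \<rho>))"
  have cpos: "c > 0" using rho bpos by (auto simp: c_def)
  have c1: "c \<le> (\<rho> - \<gamma>) / \<rho>" and c2: "c \<le> \<beta> * (1 - \<rho>)" by (auto simp: c_def)
  define dmin where "dmin = Min (range d)"
  have "dmin \<in> range d" unfolding dmin_def by (rule Min_in) auto
  then have dminpos: "dmin > 0" using dist by (auto simp: valid_dist_def)
  have dmin_le: "dmin \<le> d i" for i unfolding dmin_def by (rule Min_le) auto
  define \<kappa> where "\<kappa> = dmin * c / 2"
  have kpos: "\<kappa> > 0" using dminpos cpos by (simp add: \<kappa>_def)
  define F where "F = errf \<gamma> \<beta> d P Qs"
  define y where "y t j = (if snd j then fst (x t) $ fst j else \<rho> * snd (x t) $ fst j)"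
    for t and j :: "('s \<times> 'a) \<times> bool"
  define y' where "y' t j = (if snd j then fst (F (x t)) $ fst j else \<rho> * snd (F (x t)) $ fst j)"
    for t and j :: "('s \<times> 'a) \<times> bool"
  have der: "((\<lambda>s. y s j) has_real_derivative y' t j) (at t within {0..})" if "t \<ge> 0" for t j
  proof -
    have xd: "(x has_vector_derivative F (x t)) (at t within {0..})"
      using sol that unfolding is_solution_def F_def by blast
    show ?thesis
    proof (cases "snd j")
      case True
      then show ?thesis unfolding y_def y'_def using comp_deriv_fst[OF xd] by simp
    next
      case False
      then show ?thesis unfolding y_def y'_def using DERIV_cmult[OF comp_deriv_snd[OF xd], of \<rho>] by simp
    qed
  qed
  define C where "C = 1 + (\<Sum>j\<in>UNIV. \<bar>y 0 j\<bar>)"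
  have init: "\<bar>y 0 j\<bar> < C" for j
  proof -
    have "\<bar>y 0 j\<bar> \<le> (\<Sum>j\<in>UNIV. \<bar>y 0 j\<bar>)" by (rule member_le_sum) auto
    then show ?thesis by (simp add: C_def)
  qed
  have common: "\<bar>fst (x t) $ i\<bar> \<le> b \<and> \<bar>snd (x t) $ i\<bar> \<le> b / \<rho>"
    if all: "\<forall>k. \<bar>y t k\<bar> \<le> b" for t b i
  proof
    show "\<bar>fst (x t) $ i\<bar> \<le> b" using all[rule_format, of "(i, True)"] by (simp add: y_def)
    have "\<bar>\<rho> * snd (x t) $ i\<bar> \<le> b" using all[rule_format, of "(i, False)"] by (simp add: y_def)
    then have "\<rho> * \<bar>snd (x t) $ i\<bar> \<le> b" using rho by (simp add: abs_mult)
    then show "\<bar>snd (x t) $ i\<bar> \<le> b / \<rho>" using rho by (simp add: pos_le_divide_eq mult.commute)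
  qed
  have Sb: "\<bar>PM P (\<lambda>s. maxQ (snd (x t) + Qs) s - maxQ Qs s) $ i\<bar> \<le> b / \<rho>"
    if all: "\<forall>k. \<bar>y t k\<bar> \<le> b" for t b i
    using common[OF all] by (intro PM_bound[OF MDP] maxQ_diff_bound) blast
  have Ffst: "fst (F z) $ i = - d i * fst z $ i + \<gamma> * (d i * PM P (\<lambda>s. maxQ (snd z + Qs) s - maxQ Qs s) $ i)" for z i
    by (simp add: F_def errf_def Dmul_def)
  have Fsnd: "snd (F z) $ i = \<beta> * (d i * fst z $ i) - \<beta> * (d i * snd z $ i)" for z i
    by (simp add: F_def errf_def Dmul_def)
  have up: "y' t j < - \<kappa> * b" if "t \<ge> 0" "b > 0" "\<forall>k. \<bar>y t k\<bar> \<le> b" "y t j = b" for t b j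
  proof -
    obtain i bb where j: "j = (i, bb)" by (cases j)
    show ?thesis
    proof (cases bb)
      case True
      then have e: "fst (x t) $ i = b" using that j by (simp add: y_def)
      have "y' t j = - d i * b + \<gamma> * (d i * PM P (\<lambda>s. maxQ (snd (x t) + Qs) s - maxQ Qs s) $ i)"
        using True j e by (simp add: y'_def Ffst)
      also have "\<dots> < - (dmin * c / 2) * b"
        by (rule ineq_up1[OF dmin_le dminpos \<open>b>0\<close> g0 Sb[OF that(3)] rho(1) c1 cpos])
      finally show ?thesis by (simp add: \<kappa>_def)
    next
      case False
      then have e: "snd (x t) $ i = b / \<rho>" using that j rho by (simp add: y_def field_simps)
      have "y' t j = \<rho> * (\<beta> * (d i * fst (x t) $ i) - \<beta> * (d i * (b / \<rho>)))"
        using False j e by (simp add: y'_def Fsnd)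
      also have "\<dots> < - (dmin * c / 2) * b"
        by (rule ineq_up2[OF dmin_le dminpos \<open>b>0\<close> bpos conjunct1[OF common[OF that(3)]] rho(1,2) c2 cpos])
      finally show ?thesis by (simp add: \<kappa>_def)
    qed
  qed
  have lo: "y' t j > \<kappa> * b" if "t \<ge> 0" "b > 0" "\<forall>k. \<bar>y t k\<bar> \<le> b" "y t j = - b" for t b j
  proof -
    obtain i bb where j: "j = (i, bb)" by (cases j)
    show ?thesis
    proof (cases bb)
      case True
      then have e: "fst (x t) $ i = - b" using that j by (simp add: y_def)
      have "y' t j = - d i * (- b) + \<gamma> * (d i * PM P (\<lambda>s. maxQ (snd (x t) + Qs) s - maxQ Qs s) $ i)"
        using True j e by (simp add: y'_def Ffst)
      also have "\<dots> > (dmin * c / 2) * b"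
        by (rule ineq_lo1[OF dmin_le dminpos \<open>b>0\<close> g0 Sb[OF that(3)] rho(1) c1 cpos])
      finally show ?thesis by (simp add: \<kappa>_def)
    next
      case False
      then have e: "snd (x t) $ i = - b / \<rho>" using that j rho by (simp add: y_def field_simps)
      have "y' t j = \<rho> * (\<beta> * (d i * fst (x t) $ i) - \<beta> * (d i * (- b / \<rho>)))"
        using False j e by (simp add: y'_def Fsnd)
      also have "\<dots> > (dmin * c / 2) * b"
        by (rule ineq_lo2[OF dmin_le dminpos \<open>b>0\<close> bpos conjunct1[OF common[OF that(3)]] rho(1,2) c2 cpos])
      finally show ?thesis by (simp add: \<kappa>_def)
    qed
  qed
  have bound: "\<forall>t\<ge>0. \<forall>j. \<bar>y t j\<bar> < C * exp(-\<kappa>*t)"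
    by (rule core[OF der kpos up lo init]) auto
  define K where "K = real CARD('s \<times> 'a) * C + real CARD('s \<times> 'a) * C / \<rho>"
  have nb: "norm (x t) \<le> K * exp (-\<kappa>*t)" if "t \<ge> 0" for t
  proof -
    let ?e = "C * exp(-\<kappa>*t)"
    have b1: "\<bar>fst (x t) $ i\<bar> \<le> ?e" for i
    proof -
      have "\<bar>y t (i,True)\<bar> < ?e" using bound that by blast
      then show ?thesis by (simp add: y_def)
    qed
    have b2: "\<bar>snd (x t) $ i\<bar> \<le> ?e / \<rho>" for i
    proof -
      have "\<bar>y t (i,False)\<bar> < ?e" using bound that by blast
      then have "\<bar>\<rho> * snd (x t) $ i\<bar> \<le> ?e" by (simp add: y_def)
      then have "\<rho> * \<bar>snd (x t) $ i\<bar> \<le> ?e" using rho by (simp add: abs_mult)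
      then show ?thesis using rho by (simp add: pos_le_divide_eq mult.commute)
    qed
    have "norm (x t) = norm (fst (x t), snd (x t))" by simp
    also have "\<dots> \<le> norm (fst (x t)) + norm (snd (x t))" by (rule norm_Pair_le)
    also have "norm (fst (x t)) \<le> (\<Sum>i\<in>UNIV. \<bar>fst (x t) $ i\<bar>)" by (rule norm_le_l1_cart)
    also have "\<dots> \<le> (\<Sum>i\<in>(UNIV::('s\<times>'a) set). ?e)" by (rule sum_mono) (rule b1)
    also have "norm (snd (x t)) \<le> (\<Sum>i\<in>UNIV. \<bar>snd (x t) $ i\<bar>)" by (rule norm_le_l1_cart)
    also have "\<dots> \<le> (\<Sum>i\<in>(UNIV::('s\<times>'a) set). ?e / \<rho>)" by (rule sum_mono) (rule b2)
    also have "(\<Sum>i\<in>(UNIV::('s\<times>'a) set). ?e) + (\<Sum>i\<in>(UNIV::('s\<times>'a) set). ?e / \<rho>) = K * exp (-\<kappa>*t)"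
      by (simp add: K_def algebra_simps)
    finally show ?thesis by simp
  qed
  show ?thesis
  proof (rule Lim_null_comparison)
    show "\<forall>\<^sub>F t in at_top. norm (x t) \<le> K * exp (-\<kappa>*t)"
      using nb by (auto simp: eventually_at_top_linorder)
    show "((\<lambda>t. K * exp (-\<kappa>*t)) \<longlongrightarrow> 0) at_top" using kpos by real_asymp
  qed
qed

lemma origf_errf:
  fixes P :: "'s::finite \<times> 'a::finite \<Rightarrow> 's \<Rightarrow> real" and R Qs :: "real^('s \<times> 'a)"
  assumes "Qs = R + \<gamma> *\<^sub>R PM P (maxQ Qs)"
  shows "origf \<gamma> \<beta> d P R z = errf \<gamma> \<beta> d P Qs (z - (Qs, Qs))"
proof -
  have Ri: "R $ i = Qs $ i - \<gamma> * (\<Sum>s'\<in>UNIV. P i s' * maxQ Qs s')" for i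
    using arg_cong[OF assms, of "\<lambda>v. v $ i"] by (simp add: PM_def)
  show ?thesis
    by (simp add: origf_def errf_def Dmul_def PM_def vec_eq_iff Ri sum_subtractf right_diff_distrib algebra_simps)
qed

theorem mainTheorem12:
  fixes P :: "'s::finite \<times> 'a::finite \<Rightarrow> 's \<Rightarrow> real"
    and R Qs :: "real^('s \<times> 'a)"
    and d :: "'s \<times> 'a \<Rightarrow> real"
    and \<gamma> \<beta> :: real
  assumes "valid_MDP P"
    and "valid_dist d"
    and "0 \<le> \<gamma>" and "\<gamma> < 1"
    and "Qs = R + \<gamma> *\<^sub>R PM P (maxQ Qs)"
    and "\<beta> > 0"
  shows "{x. errf \<gamma> \<beta> d P Qs x = 0} = {0}
    \<and> (\<forall>x. is_solution (errf \<gamma> \<beta> d P Qs) x \<longrightarrow> (x \<longlongrightarrow> 0) at_top)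
    \<and> (\<forall>q. is_solution (origf \<gamma> \<beta> d P R) q \<longrightarrow> (q \<longlongrightarrow> (Qs, Qs)) at_top)"
proof (intro conjI allI impI)
  note conv = errf_converge[OF assms(1,2,3,4,6)]
  show "(x \<longlongrightarrow> 0) at_top" if "is_solution (errf \<gamma> \<beta> d P Qs) x" for x
    using conv[OF that] .
  have eq0: "errf \<gamma> \<beta> d P Qs 0 = 0"
    by (simp add: errf_def Dmul_def PM_def vec_eq_iff zero_prod_def)
  show "{x. errf \<gamma> \<beta> d P Qs x = 0} = {0}"
  proof (intro set_eqI iffI)
    fix z assume "z \<in> {x. errf \<gamma> \<beta> d P Qs x = 0}"
    then have "is_solution (errf \<gamma> \<beta> d P Qs) (\<lambda>t. z)"
      by (simp add: is_solution_def has_vector_derivative_const)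
    note conv[OF this]
    then have "((\<lambda>t::real. z) \<longlongrightarrow> 0) at_top" by simp
    then show "z \<in> {0}" by (simp add: tendsto_const_iff)
  next
    fix z :: "(real^('s \<times> 'a)) \<times> (real^('s \<times> 'a))" assume "z \<in> {0}" then show "z \<in> {x. errf \<gamma> \<beta> d P Qs x = 0}" using eq0 by simp
  qed
  fix q assume qs: "is_solution (origf \<gamma> \<beta> d P R) q"
  define x where "x t = q t - (Qs, Qs)" for t
  have "is_solution (errf \<gamma> \<beta> d P Qs) x"
    unfolding is_solution_def
  proof (intro allI impI)
    fix t :: real assume "t \<ge> 0"
    then have qd: "(q has_vector_derivative origf \<gamma> \<beta> d P R (q t)) (at t within {0..})"
      using qs by (simp add: is_solution_def)
    have "(x has_vector_derivative (origf \<gamma> \<beta> d P R (q t) - 0)) (at t within {0..})"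
      unfolding x_def by (rule has_vector_derivative_diff[OF qd has_vector_derivative_const])
    then show "(x has_vector_derivative errf \<gamma> \<beta> d P Qs (x t)) (at t within {0..})"
      by (simp add: origf_errf[OF assms(5)] x_def)
  qed
  then have "(x \<longlongrightarrow> 0) at_top" by (rule conv)
  then have "((\<lambda>t. x t + (Qs, Qs)) \<longlongrightarrow> 0 + (Qs, Qs)) at_top" by (intro tendsto_add tendsto_const)
  then show "(q \<longlongrightarrow> (Qs, Qs)) at_top" by (simp add: x_def)
qed

end
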